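(* The function $\nabla = \cos^2 \tfrac{2}{3}\psi$ is not elliptic; that is, it does not admit an extension from a small disc about $0$ to an elliptic (doubly periodic meromorphic) function on $\mathbb{C}$.
   Context: Let $0<\kappa<1$ and $\lambda=\sqrt{1-\kappa^2}\in(0,1)$. Let $F(\tfrac16,\tfrac56;\tfrac12;\cdot)$ denote the Gauss hypergeometric function. Define $u$ as a function of $\phi$ near $0$ by $u=\int_0^{\sin\phi}F(\tfrac16,\tfrac56;\tfrac12;\kappa^2t^2)\,\frac{dt}{\sqrt{1-t^2}}$; near the origin (fixing $0$) this inverts to a holomorphic function $u\mapsto\phi(u)$ with $\phi(0)=0$. Let $\psi$ be the holomorphic function near $0$ with $\psi(0)=0$ and $\sin\psi=\kappa\sin\phi$. Set $\partial=\cos\tfrac23\psi$ and $\nabla=\partial^2$, regarded as functions of $u$ on a small disc about $0$. *)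

theory Defs
  imports "HOL-Complex_Analysis.Complex_Analysis"
begin

text \<open>Gauss hypergeometric series F(a,b;c;z) (meaningful for norm z < 1).\<close>
definition hyp2F1 :: "complex \<Rightarrow> complex \<Rightarrow> complex \<Rightarrow> complex \<Rightarrow> complex" where
  "hyp2F1 a b c z =
     (\<Sum>n. pochhammer a n * pochhammer b n / (pochhammer c n * fact n) * z ^ n)"

definition u_of_phi :: "real \<Rightarrow> complex \<Rightarrow> complex" where
  "u_of_phi \<kappa> \<phi> = contour_integral (linepath 0 (sin \<phi>))
      (\<lambda>t. hyp2F1 (1/6) (5/6) (1/2) ((complex_of_real \<kappa>)\<^sup>2 * t\<^sup>2) / csqrt (1 - t\<^sup>2))"

text \<open>Elliptic function: meromorphic on C with two R-linearly independent periods.\<close>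
definition elliptic :: "(complex \<Rightarrow> complex) \<Rightarrow> bool" where
  "elliptic g \<longleftrightarrow> g meromorphic_on UNIV \<and>
     (\<exists>\<omega>1 \<omega>2. Im (\<omega>2 * cnj \<omega>1) \<noteq> 0 \<and>
        (\<forall>z. g (z + \<omega>1) = g z) \<and> (\<forall>z. g (z + \<omega>2) = g z))"

end

theory Submission
  imports Defs
begin


definition hc :: "nat \<Rightarrow> complex" where
  "hc n = pochhammer (1/6) n * pochhammer (5/6) n / (pochhammer (1/2) n * fact n)"

definition Hf :: "complex fps" where "Hf = Abs_fps hc"

lemma poch_half_nz: "pochhammer (1/2::complex) n \<noteq> 0"
proof
  assume "pochhammer (1/2::complex) n = 0"
  then obtain k where "(1/2::complex) = - of_nat k" by (auto simp: pochhammer_eq_0_iff)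
  then have "Re (1/2::complex) = Re (- (of_nat k::complex))" by (rule arg_cong)
  then show False by simp
qed

lemma hc_rec: "hc (Suc n) = hc n * complex_of_real ((real n ^ 2 + real n + 5/36) / ((real n + 1) * (real n + 1/2)))"
proof -
  have nz: "pochhammer (1/2::complex) n \<noteq> 0" by (rule poch_half_nz)
  have a: "(1/6 + of_nat n) * (5/6 + of_nat n) = (of_nat n ^ 2 + of_nat n + 5/36 :: complex)"
    by (simp add: field_simps power2_eq_square)
  have b: "(1/2 + of_nat n) * (of_nat n + 1) = ((of_nat n + 1) * (of_nat n + 1/2) :: complex)"
    by (simp add: field_simps)
  have c: "(1/2 + of_nat n) \<noteq> (0::complex)"
  proof
    assume "(1/2 + of_nat n) = (0::complex)"
    then have "Re (1/2 + of_nat n :: complex) = 0" by simp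
    then show False by simp
  qed
  show ?thesis
    unfolding hc_def using nz c
    by (simp add: pochhammer_Suc fact_Suc field_simps power2_eq_square)
qed

lemma hc_0: "hc 0 = 1" by (simp add: hc_def)

lemma hc_norm: "norm (hc n) \<le> 1"
proof (induction n)
  case 0 then show ?case by (simp add: hc_0)
next
  case (Suc n)
  have q0: "0 \<le> (real n ^ 2 + real n + 5/36) / ((real n + 1) * (real n + 1/2))"
    by (intro divide_nonneg_nonneg) auto
  have q1: "(real n ^ 2 + real n + 5/36) / ((real n + 1) * (real n + 1/2)) \<le> 1"
  proof -
    have pos: "0 < (real n + 1) * (real n + 1/2)" by simp
    show ?thesis by (subst divide_le_eq_1_pos[OF pos]) (simp add: algebra_simps power2_eq_square)
  qed
  have "norm (hc (Suc n)) = norm (hc n) * \<bar>(real n ^ 2 + real n + 5/36) / ((real n + 1) * (real n + 1/2))\<bar>"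
    by (simp only: hc_rec norm_mult norm_of_real)
  also have "\<dots> \<le> 1 * 1"
    using Suc q0 q1 by (intro mult_mono) auto
  finally show ?case by simp
qed

lemma Hf_radius: "fps_conv_radius Hf \<ge> 1"
  unfolding fps_conv_radius_def Hf_def fps_nth_Abs_fps
proof (rule conv_radius_geI_ex')
  fix r :: real assume r: "0 < r" "ereal r < 1"
  then have r1: "r < 1" by simp
  show "summable (\<lambda>n. hc n * complex_of_real r ^ n)"
  proof (rule summable_norm_cancel, rule summable_comparison_test')
    show "summable (\<lambda>n. r ^ n)" using r r1 by (intro summable_geometric) auto
    fix n :: nat assume "n \<ge> 0"
    have "norm (hc n * complex_of_real r ^ n) = norm (hc n) * r ^ n"
      using r by (simp add: norm_mult norm_power)
    also have "\<dots> \<le> 1 * r ^ n" using r hc_norm[of n] by (intro mult_right_mono) auto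
    finally show "norm (norm (hc n * complex_of_real r ^ n)) \<le> r ^ n" by simp
  qed
qed

lemma hyp_eq: "hyp2F1 (1/6) (5/6) (1/2) z = eval_fps Hf z"
  by (simp add: hyp2F1_def eval_fps_def Hf_def hc_def)


lemma hc_rec': "hc (Suc n) * ((of_nat n + 1) * (of_nat n + 1/2)) = hc n * (of_nat n ^ 2 + of_nat n + 5/36)"
proof -
  have "complex_of_real ((real n ^ 2 + real n + 5/36) / ((real n + 1) * (real n + 1/2))) =
        (of_nat n ^ 2 + of_nat n + 5/36) / ((of_nat n + 1) * (of_nat n + 1/2))"
    by simp
  moreover have "((of_nat n + 1) * (of_nat n + 1/2) :: complex) \<noteq> 0"
  proof -
    have "((of_nat n + 1) * (of_nat n + 1/2) :: complex) = of_real ((real n + 1) * (real n + 1/2))"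
      by simp
    moreover have "(real n + 1) * (real n + 1/2) \<noteq> 0" by (simp add: add_pos_pos)
    ultimately show ?thesis by (metis of_real_eq_0_iff)
  qed
  ultimately show ?thesis by (simp add: hc_rec)
qed

lemma Hf_ode: "fps_const 4 * (fps_X * fps_deriv (fps_deriv Hf)) + fps_const 2 * fps_deriv Hf =
   fps_X * (fps_const 4 * (fps_X * fps_deriv (fps_deriv Hf)) + fps_const 8 * fps_deriv Hf) + fps_const (5/9) * Hf"
proof (rule fps_ext)
  fix n
  show "fps_nth (fps_const 4 * (fps_X * fps_deriv (fps_deriv Hf)) + fps_const 2 * fps_deriv Hf) n =
        fps_nth (fps_X * (fps_const 4 * (fps_X * fps_deriv (fps_deriv Hf)) + fps_const 8 * fps_deriv Hf) + fps_const (5/9) * Hf) n"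
  proof (cases n)
    case 0
    then show ?thesis using hc_rec'[of 0] by (simp add: Hf_def fps_X_mult_nth)
  next
    case (Suc m)
    have L: "fps_nth (fps_const 4 * (fps_X * fps_deriv (fps_deriv Hf)) + fps_const 2 * fps_deriv Hf) (Suc m)
        = 4 * (hc (Suc (Suc m)) * ((of_nat (Suc m) + 1) * (of_nat (Suc m) + 1/2)))"
      by (simp add: Hf_def fps_X_mult_nth) algebra
    have R: "fps_nth (fps_X * (fps_const 4 * (fps_X * fps_deriv (fps_deriv Hf)) + fps_const 8 * fps_deriv Hf) + fps_const (5/9) * Hf) (Suc m)
        = 4 * (hc (Suc m) * (of_nat (Suc m) ^ 2 + of_nat (Suc m) + 5/36))"
    proof (cases m)
      case 0
      show ?thesis by (simp add: 0 Hf_def fps_X_mult_nth power2_eq_square)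
    next
      case (Suc k)
      show ?thesis by (simp add: Suc Hf_def fps_X_mult_nth power2_eq_square) algebra
    qed
    show ?thesis unfolding Suc L R hc_rec'[of "Suc m"] ..
  qed
qed


lemma rad_X: "fps_conv_radius (fps_X * f) \<ge> fps_conv_radius (f :: complex fps)"
  using fps_conv_radius_mult[of fps_X f] by simp

lemma rad_c: "fps_conv_radius (fps_const c * f) \<ge> fps_conv_radius (f :: complex fps)"
  using fps_conv_radius_mult[of "fps_const c" f] by simp

lemma ev_X: "norm s < fps_conv_radius f \<Longrightarrow> eval_fps (fps_X * f) s = s * eval_fps (f :: complex fps) s"
  by (subst eval_fps_mult) auto

lemma ev_c: "norm s < fps_conv_radius f \<Longrightarrow> eval_fps (fps_const c * f) s = c * eval_fps (f :: complex fps) s"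
  by (subst eval_fps_mult) auto

lemma ev_add: "norm s < fps_conv_radius f \<Longrightarrow> norm s < fps_conv_radius g \<Longrightarrow>
   eval_fps (f + g) s = eval_fps f s + eval_fps (g :: complex fps) s"
  by (rule eval_fps_add)

lemma rad_add: "norm s < fps_conv_radius f \<Longrightarrow> norm s < fps_conv_radius g \<Longrightarrow>
   norm s < fps_conv_radius (f + (g :: complex fps))"
  using fps_conv_radius_add[of f g] by (auto simp: min_def split: if_splits)

lemma rad_X': "norm s < fps_conv_radius f \<Longrightarrow> norm s < fps_conv_radius (fps_X * (f :: complex fps))"
  using rad_X[of f] by (meson less_le_trans)

lemma rad_c': "norm s < fps_conv_radius f \<Longrightarrow> norm s < fps_conv_radius (fps_const c * (f :: complex fps))"
  using rad_c[of f] by (meson less_le_trans)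

abbreviation "H0 \<equiv> eval_fps Hf"
abbreviation "H1 \<equiv> eval_fps (fps_deriv Hf)"
abbreviation "H2 \<equiv> eval_fps (fps_deriv (fps_deriv Hf))"

lemma rads:
  assumes "norm s < 1"
  shows "norm s < fps_conv_radius Hf" "norm s < fps_conv_radius (fps_deriv Hf)"
        "norm s < fps_conv_radius (fps_deriv (fps_deriv Hf))"
proof -
  have *: "ereal (norm s) < 1" using assms by simp
  show "norm s < fps_conv_radius Hf" using * Hf_radius by (meson less_le_trans)
  then show "norm s < fps_conv_radius (fps_deriv Hf)" using fps_conv_radius_deriv[of Hf] by (meson less_le_trans)
  then show "norm s < fps_conv_radius (fps_deriv (fps_deriv Hf))" using fps_conv_radius_deriv[of "fps_deriv Hf"] by (meson less_le_trans)
qed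

lemma H_ode:
  assumes "norm s < 1"
  shows "4 * (s * H2 s) + 2 * H1 s = s * (4 * (s * H2 s) + 8 * H1 s) + 5/9 * H0 s"
proof -
  note r = rads[OF assms]
  have "eval_fps (fps_const 4 * (fps_X * fps_deriv (fps_deriv Hf)) + fps_const 2 * fps_deriv Hf) s =
        eval_fps (fps_X * (fps_const 4 * (fps_X * fps_deriv (fps_deriv Hf)) + fps_const 8 * fps_deriv Hf) + fps_const (5/9) * Hf) s"
    by (simp only: Hf_ode)
  then show ?thesis
    by (simp add: ev_add ev_X ev_c rad_add rad_X' rad_c' r)
qed

lemma H_deriv:
  assumes "norm s < 1"
  shows "(H0 has_field_derivative H1 s) (at s)" "(H1 has_field_derivative H2 s) (at s)"
  using has_field_derivative_eval_fps rads[OF assms] by blast+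




lemma ode_cos:
  fixes Z Zd :: "complex \<Rightarrow> complex" and w :: complex and S :: "complex set"
  assumes S: "convex S" "0 \<in> S" and w: "w \<noteq> 0"
    and d1: "\<And>x. x \<in> S \<Longrightarrow> (Z has_field_derivative Zd x) (at x)"
    and d2: "\<And>x. x \<in> S \<Longrightarrow> (Zd has_field_derivative (-(w^2) * Z x)) (at x)"
    and i: "Z 0 = 1" "Zd 0 = 0"
    and x: "x \<in> S"
  shows "Z x = cos (w * x)"
proof -
  define E1 where "E1 y = (Zd y + \<i>*w*Z y) * exp(-(\<i>*w*y))" for y
  define E2 where "E2 y = (Zd y - \<i>*w*Z y) * exp(\<i>*w*y)" for y
  have "\<exists>c. \<forall>y\<in>S. E1 y = c"
  proof (rule has_field_derivative_zero_constant[OF S(1)])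
    fix y assume y: "y \<in> S"
    have "(E1 has_field_derivative ((-(w^2) * Z y + \<i>*w*Zd y) * exp(-(\<i>*w*y)) + (Zd y + \<i>*w*Z y)*(exp(-(\<i>*w*y)) * (-(\<i>*w))))) (at y)"
      unfolding E1_def by (auto intro!: derivative_eq_intros d1 d2 y)
    moreover have "((-(w^2) * Z y + \<i>*w*Zd y) * exp(-(\<i>*w*y)) + (Zd y + \<i>*w*Z y)*(exp(-(\<i>*w*y)) * (-(\<i>*w)))) = 0"
      by (simp add: algebra_simps power2_eq_square)
    ultimately show "(E1 has_field_derivative 0) (at y within S)"
      using has_field_derivative_at_within by fastforce
  qed
  then have e1: "E1 x = E1 0" using x S by metis
  have "\<exists>c. \<forall>y\<in>S. E2 y = c"
  proof (rule has_field_derivative_zero_constant[OF S(1)])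
    fix y assume y: "y \<in> S"
    have "(E2 has_field_derivative ((-(w^2) * Z y - \<i>*w*Zd y) * exp(\<i>*w*y) + (Zd y - \<i>*w*Z y)*(exp(\<i>*w*y) * (\<i>*w)))) (at y)"
      unfolding E2_def by (auto intro!: derivative_eq_intros d1 d2 y)
    moreover have "((-(w^2) * Z y - \<i>*w*Zd y) * exp(\<i>*w*y) + (Zd y - \<i>*w*Z y)*(exp(\<i>*w*y) * (\<i>*w))) = 0"
      by (simp add: algebra_simps power2_eq_square)
    ultimately show "(E2 has_field_derivative 0) (at y within S)"
      using has_field_derivative_at_within by fastforce
  qed
  then have e2: "E2 x = E2 0" using x S by metis
  have a: "Zd x + \<i>*w*Z x = \<i>*w*exp(\<i>*w*x)"
  proof -
    have "(Zd x + \<i>*w*Z x) * exp(-(\<i>*w*x)) = \<i>*w" using e1 i by (simp add: E1_def)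
    then have "(Zd x + \<i>*w*Z x) * exp(-(\<i>*w*x)) * exp(\<i>*w*x) = \<i>*w*exp(\<i>*w*x)" by simp
    moreover have "exp(-(\<i>*w*x)) * exp(\<i>*w*x) = 1" by (simp add: exp_add[symmetric])
    ultimately show ?thesis by (metis mult.assoc mult_1_right)
  qed
  have b: "Zd x - \<i>*w*Z x = -\<i>*w*exp(-(\<i>*w*x))"
  proof -
    have "(Zd x - \<i>*w*Z x) * exp(\<i>*w*x) = -\<i>*w" using e2 i by (simp add: E2_def)
    then have "(Zd x - \<i>*w*Z x) * exp(\<i>*w*x) * exp(-(\<i>*w*x)) = -\<i>*w*exp(-(\<i>*w*x))" by simp
    then show ?thesis by (simp add: mult.assoc exp_minus_inverse)
  qed
  have "2*\<i>*w*Z x = (Zd x + \<i>*w*Z x) - (Zd x - \<i>*w*Z x)" by (simp add: algebra_simps)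
  also have "\<dots> = \<i>*w*exp(\<i>*w*x) - (-\<i>*w*exp(-(\<i>*w*x)))" by (simp only: a b)
  also have "\<dots> = \<i>*w*(exp(\<i>*w*x) + exp(-(\<i>*w*x)))" by (simp add: algebra_simps)
  finally have "2*\<i>*w*Z x = \<i>*w*(exp(\<i>*w*x) + exp(-(\<i>*w*x)))" .
  then have "(\<i>*w) * (2 * Z x) = (\<i>*w) * (exp(\<i>*w*x) + exp(-(\<i>*w*x)))"
    by (simp add: algebra_simps)
  moreover have "\<i>*w \<noteq> 0" using w by simp
  ultimately have "2 * Z x = exp(\<i>*w*x) + exp(-(\<i>*w*x))" by (metis mult_left_cancel)
  then have "Z x = (exp(\<i>*(w*x)) + exp(-(\<i>*(w*x))))/2"
    by (simp add: field_simps)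
  then show ?thesis by (simp add: cos_exp_eq)
qed


lemma closed_form:
  obtains \<rho> :: real where "\<rho> > 0" "\<And>x. x \<in> ball (0::complex) \<rho> \<Longrightarrow> norm (sin x ^ 2) < 1"
    "\<And>x. x \<in> ball (0::complex) \<rho> \<Longrightarrow> H0 (sin x ^ 2) * cos x = cos (2/3 * x)"
proof -
  have "open {x::complex. norm (sin x ^ 2) < 1}"
    by (intro open_Collect_less continuous_intros)
  moreover have "(0::complex) \<in> {x. norm (sin x ^ 2) < 1}" by simp
  ultimately obtain \<rho> where \<rho>: "\<rho> > 0" "ball 0 \<rho> \<subseteq> {x::complex. norm (sin x ^ 2) < 1}"
    using open_contains_ball by blast
  have ns: "norm (sin x ^ 2) < 1" if "x \<in> ball 0 \<rho>" for x :: complex using \<rho> that by blast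
  have hs: "((\<lambda>x. H0 (sin x ^ 2)) has_field_derivative H1 (sin x ^ 2) * (2 * sin x * cos x)) (at x)"
    if "x \<in> ball 0 \<rho>" for x
  proof -
    have d: "((\<lambda>x. sin x ^ 2) has_field_derivative (2 * sin x * cos x)) (at x)"
      by (auto intro!: derivative_eq_intros)
    show ?thesis by (rule DERIV_chain2[where f=H0 and g="\<lambda>x. sin x ^ 2", OF H_deriv(1)[OF ns[OF that]] d])
  qed
  have hs1: "((\<lambda>x. H1 (sin x ^ 2)) has_field_derivative H2 (sin x ^ 2) * (2 * sin x * cos x)) (at x)"
    if "x \<in> ball 0 \<rho>" for x
  proof -
    have d: "((\<lambda>x. sin x ^ 2) has_field_derivative (2 * sin x * cos x)) (at x)"
      by (auto intro!: derivative_eq_intros)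
    show ?thesis by (rule DERIV_chain2[where f=H1 and g="\<lambda>x. sin x ^ 2", OF H_deriv(2)[OF ns[OF that]] d])
  qed
  define Z where "Z x = H0 (sin x ^ 2) * cos x" for x
  define Z1 where "Z1 x = H1 (sin x ^ 2) * (2 * sin x * cos x) * cos x - H0 (sin x ^ 2) * sin x" for x
  have "Z x = cos (2/3 * x)" if x: "x \<in> ball 0 \<rho>" for x
  proof (rule ode_cos[where S="ball 0 \<rho>" and Z=Z and Zd=Z1 and w="2/3"])
    show "convex (ball (0::complex) \<rho>)" "0 \<in> ball (0::complex) \<rho>" using \<rho> by auto
    show "(2/3::complex) \<noteq> 0" by simp
    show "Z 0 = 1" "Z1 0 = 0" by (simp_all add: Z_def Z1_def eval_fps_at_0 Hf_def hc_def)
    show "x \<in> ball 0 \<rho>" by fact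
    fix y assume y: "y \<in> ball (0::complex) \<rho>"
    show "(Z has_field_derivative Z1 y) (at y)"
      unfolding Z_def Z1_def
      by (rule derivative_eq_intros hs[OF y] | simp)+
    have t1: "((\<lambda>x. 2 * sin x * cos x) has_field_derivative 2 * (cos y * cos y - sin y * sin y)) (at y)"
      by (auto intro!: derivative_eq_intros simp: algebra_simps)
    have Z1e: "Z1 = (\<lambda>x. H1 (sin x ^ 2) * (2 * sin x * cos x) * cos x - H0 (sin x ^ 2) * sin x)"
      by (rule ext) (simp add: Z1_def)
    have "(Z1 has_field_derivative
        (H2 (sin y ^ 2) * (2 * sin y * cos y) * (2 * sin y * cos y) + 2 * (cos y * cos y - sin y * sin y) * H1 (sin y ^ 2)) * cos y
        + (- sin y) * (H1 (sin y ^ 2) * (2 * sin y * cos y))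
        - ((H1 (sin y ^ 2) * (2 * sin y * cos y)) * sin y + cos y * H0 (sin y ^ 2))) (at y)"
      unfolding Z1e
      by (rule DERIV_diff[OF DERIV_mult[OF DERIV_mult[OF hs1[OF y] t1] DERIV_cos] DERIV_mult[OF hs[OF y] DERIV_sin]])
    moreover have "(H2 (sin y ^ 2) * (2 * sin y * cos y) * (2 * sin y * cos y) + 2 * (cos y * cos y - sin y * sin y) * H1 (sin y ^ 2)) * cos y
        + (- sin y) * (H1 (sin y ^ 2) * (2 * sin y * cos y))
        - ((H1 (sin y ^ 2) * (2 * sin y * cos y)) * sin y + cos y * H0 (sin y ^ 2)) = -((2/3)^2) * Z y"
    proof -
      have o: "4 * (sin y ^ 2 * H2 (sin y ^ 2)) + 2 * H1 (sin y ^ 2) =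
          sin y ^ 2 * (4 * (sin y ^ 2 * H2 (sin y ^ 2)) + 8 * H1 (sin y ^ 2)) + 5/9 * H0 (sin y ^ 2)"
        by (rule H_ode[OF ns[OF y]])
      have p: "sin y ^ 2 + cos y ^ 2 = 1" by (rule sin_cos_squared_add)
      show ?thesis using o p unfolding Z_def by algebra
    qed
    ultimately show "(Z1 has_field_derivative (-((2/3)^2) * Z y)) (at y)" by simp
  qed
  then show ?thesis using that[OF \<rho>(1) ns] unfolding Z_def by blast
qed




lemma H0_holo: "H0 holomorphic_on ball 0 1"
proof (rule holomorphic_on_eval_fps)
  show "ball 0 1 \<subseteq> eball 0 (fps_conv_radius Hf)"
  proof (rule subsetI)
    fix z
    assume "z \<in> ball 0 1"
    then have "ereal (dist 0 z) < 1" by simp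
    then show "z \<in> eball 0 (fps_conv_radius Hf)" using Hf_radius unfolding eball_def
      by (metis less_le_trans mem_Collect_eq)
  qed
qed

lemma small_sq: "t \<in> ball 0 (1/2) \<Longrightarrow> norm ((t::complex)^2) \<le> 1/4"
proof -
  assume "t \<in> ball 0 (1/2)"
  then have "norm t \<le> 1/2" by simp
  then have "norm t ^ 2 \<le> (1/2)^2" by (intro power_mono) auto
  then show ?thesis by (simp add: norm_power power_divide)
qed

lemma ev_ball:
  assumes "eventually P (at (0::complex))" "P 0"
  shows "\<exists>d>0. \<forall>u\<in>ball 0 d. P u"
proof -
  from assms(1) obtain d where d: "d > 0" "\<And>u. u \<noteq> 0 \<Longrightarrow> dist u 0 < d \<Longrightarrow> P u"
    unfolding eventually_at by blast
  then show ?thesis using assms(2) by (metis dist_commute mem_ball)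
qed

lemma local_ode:
  fixes \<kappa> :: real and r :: real and \<phi> \<psi> :: "complex \<Rightarrow> complex"
  assumes "0 < \<kappa>" and "\<kappa> < 1" and "0 < r"
    and "\<phi> holomorphic_on ball 0 r" and "\<phi> 0 = 0"
    and "\<forall>u\<in>ball 0 r. u_of_phi \<kappa> (\<phi> u) = u"
    and "\<psi> holomorphic_on ball 0 r" and "\<psi> 0 = 0"
    and "\<forall>u\<in>ball 0 r. sin (\<psi> u) = complex_of_real \<kappa> * sin (\<phi> u)"
  obtains r1 where "0 < r1" "r1 \<le> r" "\<And>u. u \<in> ball 0 r1 \<Longrightarrow>
      (deriv (\<lambda>u. cos (2/3 * \<psi> u) ^ 2) u ^ 2 - 16/9 * ((complex_of_real \<kappa>)^2 - 1/2) * (1 - cos (2/3 * \<psi> u) ^ 2)) ^ 2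
      = (16/9)^2 * (1 - cos (2/3 * \<psi> u) ^ 2) ^ 2 * cos (2/3 * \<psi> u) ^ 2 * (2 * cos (2/3 * \<psi> u) ^ 2 - 3/2) ^ 2"
proof -
  note phiholo = assms(4) and psiholo = assms(7)
  define k where "k = complex_of_real \<kappa>"
  have k2: "norm (k^2) < 1" using assms(1,2) by (simp add: k_def norm_power power_less_one_iff abs_less_iff)
  define f where "f t = H0 (k^2 * t^2) / csqrt (1 - t^2)" for t
  have fholo: "f holomorphic_on ball 0 (1/2)"
  proof -
    have a: "(\<lambda>t. H0 (k^2 * t^2)) holomorphic_on ball 0 (1/2)"
    proof (rule holomorphic_on_compose_gen[OF _ H0_holo, unfolded o_def])
      show "(\<lambda>t. k^2 * t^2) holomorphic_on ball 0 (1/2)" by (intro holomorphic_intros)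
      show "(\<lambda>t. k^2 * t^2) ` ball 0 (1/2) \<subseteq> ball 0 1"
      proof clarify
        fix t :: complex assume t: "t \<in> ball 0 (1/2)"
        have "norm (k^2 * t^2) = norm (k^2) * norm (t^2)" by (simp add: norm_mult)
        also have "\<dots> \<le> norm (k^2) * 1"
          using small_sq[OF t] by (intro mult_left_mono) auto
        also have "\<dots> < 1" using k2 by simp
        finally show "k^2 * t^2 \<in> ball 0 1" by simp
      qed
    qed
    have b: "(\<lambda>t. csqrt (1 - t^2)) holomorphic_on ball 0 (1/2)"
    proof (intro holomorphic_intros)
      fix t :: complex assume t: "t \<in> ball 0 (1/2)"
      have "Re (t^2) \<le> norm (t^2)" by (rule complex_Re_le_cmod)
      also have "\<dots> < 1" using small_sq[OF t] by simp
      finally have "Re (1 - t^2) > 0" by simp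
      then show "1 - t^2 \<notin> \<real>\<^sub>\<le>\<^sub>0" by (auto simp: complex_nonpos_Reals_iff)
    qed
    have c: "csqrt (1 - t^2) \<noteq> 0" if "t \<in> ball 0 (1/2)" for t :: complex
    proof
      assume "csqrt (1 - t^2) = 0"
      then have "1 - t^2 = 0" by simp
      then have "norm (t^2) = 1" by (metis norm_one right_minus_eq)
      moreover have "norm (t^2) < 1" using small_sq[OF that] by simp
      ultimately show False by simp
    qed
    show ?thesis unfolding f_def by (intro holomorphic_intros a b c)
  qed
  obtain P where P: "\<And>x. x \<in> ball 0 (1/2) \<Longrightarrow> (P has_field_derivative f x) (at x within ball 0 (1/2))"
    using holomorphic_convex_primitive'[OF convex_ball open_ball fholo] by blast
  have P': "(P has_field_derivative f x) (at x)" if "x \<in> ball 0 (1/2)" for x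
    using P[OF that] at_within_open[OF that open_ball] by metis
  have ueq: "u_of_phi \<kappa> z = P (sin z) - P 0" if z: "norm (sin z) < 1/2" for z
  proof -
    have "(f has_contour_integral (P (pathfinish (linepath 0 (sin z))) - P (pathstart (linepath 0 (sin z))))) (linepath 0 (sin z))"
    proof (rule contour_integral_primitive[OF P])
      show "path_image (linepath 0 (sin z)) \<subseteq> ball 0 (1/2)"
        unfolding path_image_linepath using z by (intro closed_segment_subset) auto
    qed auto
    then have "contour_integral (linepath 0 (sin z)) f = P (sin z) - P 0"
      by (simp add: contour_integral_unique)
    then show ?thesis unfolding u_of_phi_def hyp_eq f_def k_def by simp
  qed
  obtain \<rho> :: real where \<rho>: "\<rho> > 0" "\<And>x. x \<in> ball (0::complex) \<rho> \<Longrightarrow> norm (sin x ^ 2) < 1"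
    "\<And>x. x \<in> ball (0::complex) \<rho> \<Longrightarrow> H0 (sin x ^ 2) * cos x = cos (2/3 * x)"
    using closed_form by blast
  have cphi: "isCont \<phi> 0"
    using holomorphic_on_imp_continuous_on[OF phiholo] assms(3) by (simp add: continuous_on_eq_continuous_at)
  have cpsi: "isCont \<psi> 0"
    using holomorphic_on_imp_continuous_on[OF psiholo] assms(3) by (simp add: continuous_on_eq_continuous_at)
  have t1: "((\<lambda>u. sin (\<phi> u)) \<longlongrightarrow> 0) (at 0)"
  proof -
    have "isCont (\<lambda>u. sin (\<phi> u)) 0" by (intro continuous_intros cphi)
    then show ?thesis unfolding isCont_def by (simp add: assms(5))
  qed
  have t2: "(\<psi> \<longlongrightarrow> 0) (at 0)" using cpsi assms(8) by (simp add: isCont_def)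
  have t3: "((\<lambda>u. cos (\<phi> u)) \<longlongrightarrow> 1) (at 0)"
  proof -
    have "isCont (\<lambda>u. cos (\<phi> u)) 0" by (intro continuous_intros cphi)
    then show ?thesis unfolding isCont_def by (simp add: assms(5))
  qed
  have t4: "((\<lambda>u. cos (\<psi> u)) \<longlongrightarrow> 1) (at 0)"
  proof -
    have "isCont (\<lambda>u. cos (\<psi> u)) 0" by (intro continuous_intros cpsi)
    then show ?thesis unfolding isCont_def by (simp add: assms(8))
  qed
  define Good where "Good u \<longleftrightarrow> dist (sin (\<phi> u)) 0 < 1/2 \<and> dist (\<psi> u) 0 < \<rho> \<and>
      dist (cos (\<phi> u)) 1 < 1 \<and> dist (cos (\<psi> u)) 1 < 1" for u
  have "eventually Good (at 0)"
    unfolding Good_def using \<rho>(1)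
    by (intro eventually_conj tendstoD[OF t1] tendstoD[OF t2] tendstoD[OF t3] tendstoD[OF t4]) auto
  moreover have "Good 0" using \<rho>(1) assms(5,8) by (simp add: Good_def)
  ultimately obtain d where d: "d > 0" "\<And>u. u \<in> ball 0 d \<Longrightarrow> Good u"
    using ev_ball by blast
  define r1 where "r1 = min d r"
  have r1: "0 < r1" "r1 \<le> r" using d assms(3) by (auto simp: r1_def)
  have inr: "u \<in> ball 0 r" if "u \<in> ball 0 r1" for u using that r1 by auto
  have G: "Good u" if "u \<in> ball 0 r1" for u using that d by (auto simp: r1_def)
  have Re_pos: "Re z > 0" if "dist z 1 < 1" for z :: complex
  proof -
    have "\<bar>Re (z - 1)\<bar> \<le> norm (z - 1)" by (rule abs_Re_le_cmod)
    also have "\<dots> < 1" using that by (simp add: dist_norm)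
    finally show ?thesis by simp
  qed
  show ?thesis
  proof (rule that[OF r1])
    fix u :: complex assume u: "u \<in> ball 0 r1"
    have ur: "u \<in> ball 0 r" by (rule inr[OF u])
    have Gu: "Good u" by (rule G[OF u])
    have sphi: "sin (\<phi> u) \<in> ball 0 (1/2)" using Gu by (simp add: Good_def dist_commute)
    have psir: "\<psi> u \<in> ball 0 \<rho>" using Gu by (simp add: Good_def dist_commute)
    have recphi: "Re (cos (\<phi> u)) > 0" using Gu Re_pos by (simp add: Good_def)
    have cphinz: "cos (\<phi> u) \<noteq> 0" using recphi by auto
    have cpsinz: "cos (\<psi> u) \<noteq> 0" using Gu Re_pos[of "cos (\<psi> u)"] by (auto simp: Good_def)
    have dphi: "(\<phi> has_field_derivative deriv \<phi> w) (at w)" if "w \<in> ball 0 r" for w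
      using holomorphic_derivI[OF phiholo open_ball that] .
    have dpsi: "(\<psi> has_field_derivative deriv \<psi> w) (at w)" if "w \<in> ball 0 r" for w
      using holomorphic_derivI[OF psiholo open_ball that] .
    have gd: "((\<lambda>u. sin (\<phi> u)) has_field_derivative cos (\<phi> u) * deriv \<phi> u) (at u)"
      by (rule DERIV_chain2[where f=sin and g=\<phi>, OF DERIV_sin dphi[OF ur]])
    have d1: "((\<lambda>u. P (sin (\<phi> u))) has_field_derivative f (sin (\<phi> u)) * (cos (\<phi> u) * deriv \<phi> u)) (at u)"
      by (rule DERIV_chain2[where f=P and g="\<lambda>u. sin (\<phi> u)", OF P'[OF sphi] gd])
    have eqB: "P (sin (\<phi> w)) = w + P 0" if "w \<in> ball 0 r1" for w
    proof -
      have "dist (sin (\<phi> w)) 0 < 1/2" using G[OF that] by (simp add: Good_def)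
      then have "u_of_phi \<kappa> (\<phi> w) = P (sin (\<phi> w)) - P 0" by (intro ueq) simp
      moreover have "u_of_phi \<kappa> (\<phi> w) = w" using assms(6) inr[OF that] by blast
      ultimately show ?thesis by (simp add: algebra_simps)
    qed
    have "((\<lambda>w. w + P 0) has_field_derivative f (sin (\<phi> u)) * (cos (\<phi> u) * deriv \<phi> u)) (at u)"
      by (rule has_field_derivative_transform_within_open[OF d1 open_ball u]) (rule eqB)
    moreover have "((\<lambda>w. w + P 0) has_field_derivative 1) (at u)"
      by (auto intro!: derivative_eq_intros)
    ultimately have e1: "f (sin (\<phi> u)) * (cos (\<phi> u) * deriv \<phi> u) = 1"
      by (rule DERIV_unique)
    have fs: "f (sin (\<phi> u)) * cos (\<phi> u) = H0 (sin (\<psi> u) ^ 2)"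
    proof -
      have "1 - sin (\<phi> u) ^ 2 = cos (\<phi> u) ^ 2" using sin_cos_squared_add[of "\<phi> u"] by algebra
      then have "csqrt (1 - sin (\<phi> u) ^ 2) = cos (\<phi> u)" using csqrt_square[of "cos (\<phi> u)"] recphi by simp
      moreover have "k^2 * sin (\<phi> u) ^ 2 = sin (\<psi> u) ^ 2" using assms(9) ur by (simp add: k_def power_mult_distrib)
      ultimately show ?thesis using cphinz by (simp add: f_def)
    qed
    have e2: "H0 (sin (\<psi> u) ^ 2) * deriv \<phi> u = 1" using e1 fs by (metis mult.assoc)
    have cf: "H0 (sin (\<psi> u) ^ 2) * cos (\<psi> u) = cos (2/3 * \<psi> u)" by (rule \<rho>(3)[OF psir])
    define C where "C = cos (2/3 * \<psi> u)"
    define S where "S = sin (2/3 * \<psi> u)"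
    have e3: "C * deriv \<phi> u = cos (\<psi> u)"
      using e2 cf unfolding C_def by (metis mult.commute mult.left_commute mult_1_right)
    have gpsi: "((\<lambda>u. sin (\<psi> u)) has_field_derivative cos (\<psi> u) * deriv \<psi> u) (at u)"
      by (rule DERIV_chain2[where f=sin and g=\<psi>, OF DERIV_sin dpsi[OF ur]])
    have gphi: "((\<lambda>u. k * sin (\<phi> u)) has_field_derivative k * (cos (\<phi> u) * deriv \<phi> u)) (at u)"
      by (rule DERIV_cmult[OF gd])
    have "((\<lambda>u. k * sin (\<phi> u)) has_field_derivative cos (\<psi> u) * deriv \<psi> u) (at u)"
      by (rule has_field_derivative_transform_within_open[OF gpsi open_ball u])
         (metis assms(9) inr k_def)
    then have e4: "cos (\<psi> u) * deriv \<psi> u = k * (cos (\<phi> u) * deriv \<phi> u)"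
      using gphi by (rule DERIV_unique)
    have "cos (\<psi> u) * (deriv \<psi> u * C) = cos (\<psi> u) * (k * cos (\<phi> u))"
    proof -
      have "cos (\<psi> u) * (deriv \<psi> u * C) = C * (cos (\<psi> u) * deriv \<psi> u)" by (simp add: algebra_simps)
      also have "\<dots> = k * cos (\<phi> u) * (C * deriv \<phi> u)" unfolding e4 by (simp add: algebra_simps)
      also have "\<dots> = cos (\<psi> u) * (k * cos (\<phi> u))" unfolding e3 by (simp add: algebra_simps)
      finally show ?thesis .
    qed
    then have e5: "deriv \<psi> u * C = k * cos (\<phi> u)" using cpsinz by simp
    have dN: "((\<lambda>u. cos (2/3 * \<psi> u) ^ 2) has_field_derivative 2 * C * (- S * (2/3 * deriv \<psi> u))) (at u)"
      unfolding C_def S_def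
      by (rule derivative_eq_intros dpsi[OF ur] refl | simp)+
    then have pN: "deriv (\<lambda>u. cos (2/3 * \<psi> u) ^ 2) u = -(4/3) * S * (k * cos (\<phi> u))"
      unfolding e5[symmetric] by (simp add: DERIV_imp_deriv algebra_simps)
    have q1: "S^2 + C^2 = 1" unfolding S_def C_def by (rule sin_cos_squared_add)
    have q2: "cos (2 * \<psi> u) = 4 * C^3 - 3 * C"
      using cos_treble_cos[of "2/3 * \<psi> u"] unfolding C_def by simp
    have q3: "cos (2 * \<psi> u) = 1 - 2 * sin (\<psi> u) ^ 2" by (rule cos_double_sin)
    have q4: "sin (\<psi> u) = k * sin (\<phi> u)" using assms(9) ur by (simp add: k_def)
    have q5: "sin (\<phi> u) ^ 2 + cos (\<phi> u) ^ 2 = 1" by (rule sin_cos_squared_add)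
    show "(deriv (\<lambda>u. cos (2/3 * \<psi> u) ^ 2) u ^ 2 - 16/9 * ((complex_of_real \<kappa>)^2 - 1/2) * (1 - cos (2/3 * \<psi> u) ^ 2)) ^ 2
      = (16/9)^2 * (1 - cos (2/3 * \<psi> u) ^ 2) ^ 2 * cos (2/3 * \<psi> u) ^ 2 * (2 * cos (2/3 * \<psi> u) ^ 2 - 3/2) ^ 2"
    proof -
      define p where "p = deriv (\<lambda>u. cos (2/3 * \<psi> u) ^ 2) u"
      have h1: "p^2 = 16/9 * S^2 * (k^2 * cos (\<phi> u)^2)" unfolding p_def pN by algebra
      have h2: "k^2 * cos (\<phi> u)^2 = k^2 - sin (\<psi> u)^2" using q4 q5 by algebra
      have h3: "sin (\<psi> u)^2 = (1 - (4 * C^3 - 3 * C)) / 2" using q2 q3 by algebra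
      have h4: "S^2 = 1 - C^2" using q1 by algebra
      have hp: "p^2 = 16/9 * (1 - C^2) * (k^2 - (1 - (4 * C^3 - 3 * C)) / 2)"
        unfolding h1 h2 h3 h4 ..
      have h5: "p^2 - 16/9 * (k^2 - 1/2) * (1 - C^2) = 16/9 * (1 - C^2) * C * (2 * C^2 - 3/2)"
        unfolding hp by algebra
      show ?thesis unfolding p_def[symmetric] C_def[symmetric] k_def[symmetric] h5 by algebra
    qed
  qed
qed




lemma per_int:
  fixes G :: "complex \<Rightarrow> complex"
  assumes "\<And>z. G (z + w) = G z"
  shows "G (z + of_int n * w) = G z"
proof -
  have nat: "G (z + of_nat m * w) = G z" for z m
  proof (induction m arbitrary: z)
    case 0 then show ?case by simp
  next
    case (Suc m)
    have "G (z + of_nat (Suc m) * w) = G ((z + of_nat m * w) + w)" by (simp add: algebra_simps)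
    also have "\<dots> = G z" using assms Suc by simp
    finally show ?case .
  qed
  show ?thesis
  proof (cases "n \<ge> 0")
    case True
    then obtain m where "n = int m" by (metis nonneg_int_cases)
    then show ?thesis using nat by simp
  next
    case False
    then obtain m where m: "n = - int m" by (metis nonpos_int_cases linear)
    have "G z = G ((z - of_nat m * w) + of_nat m * w)" by simp
    also have "\<dots> = G (z - of_nat m * w)" by (rule nat)
    finally show ?thesis using m by simp
  qed
qed

lemma lattice_coords:
  fixes z w1 w2 :: complex
  assumes "Im (w2 * cnj w1) \<noteq> 0"
  shows "\<exists>a b :: real. z = of_real a * w1 + of_real b * w2"
proof -
  define D where "D = Im (w2 * cnj w1)"
  have "z * of_real D = of_real (Im (z * cnj w1)) * w2 - of_real (Im (z * cnj w2)) * w1"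
    unfolding D_def by (simp add: complex_eq_iff algebra_simps)
  moreover define A where "A = Im (z * cnj w1)"
  moreover define B where "B = Im (z * cnj w2)"
  ultimately have E: "z * of_real D = of_real A * w2 - of_real B * w1" by simp
  have Dnz: "D \<noteq> 0" using assms by (simp add: D_def)
  have "z = (z * of_real D) / of_real D" using Dnz by simp
  also have "\<dots> = (of_real A * w2 - of_real B * w1) / of_real D" by (simp only: E)
  also have "\<dots> = of_real (- B / D) * w1 + of_real (A / D) * w2"
    using Dnz by (simp add: field_simps)
  finally show ?thesis by blast
qed


lemma N_not_one:
  fixes \<kappa> :: real and r :: real and \<phi> \<psi> :: "complex \<Rightarrow> complex"
  assumes "0 < \<kappa>" and "0 < r"
    and "\<forall>u\<in>ball 0 r. u_of_phi \<kappa> (\<phi> u) = u"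
    and "\<psi> holomorphic_on ball 0 r" and "\<psi> 0 = 0"
    and "\<forall>u\<in>ball 0 r. sin (\<psi> u) = complex_of_real \<kappa> * sin (\<phi> u)"
  shows "\<exists>u\<in>ball 0 r. cos (2/3 * \<psi> u) ^ 2 \<noteq> 1"
proof (rule ccontr)
  assume "\<not> ?thesis"
  then have one: "\<forall>u\<in>ball 0 r. cos (2/3 * \<psi> u) ^ 2 = 1" by blast
  have "isCont \<psi> 0"
    using holomorphic_on_imp_continuous_on[OF assms(4)] assms(2) by (simp add: continuous_on_eq_continuous_at)
  then have "(\<psi> \<longlongrightarrow> 0) (at 0)" using assms(5) by (simp add: isCont_def)
  then have "eventually (\<lambda>u. dist (\<psi> u) 0 < 1) (at 0)" by (rule tendstoD) simp
  then obtain d where d: "d > 0" "\<And>u. u \<in> ball 0 d \<Longrightarrow> dist (\<psi> u) 0 < 1"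
    using ev_ball[of "\<lambda>u. dist (\<psi> u) 0 < 1"] assms(5) by auto
  define u :: complex where "u = of_real (min d r / 2)"
  have u: "u \<in> ball 0 d" "u \<in> ball 0 r" "u \<noteq> 0" using d assms(2) by (auto simp: u_def)
  have "sin (2/3 * \<psi> u) ^ 2 = 0"
    using one u(2) sin_cos_squared_add[of "2/3 * \<psi> u"] by auto
  then have "sin (2/3 * \<psi> u) = 0" by simp
  then obtain n :: int where n: "2/3 * \<psi> u = of_real (of_int n * pi)" by (auto simp: sin_eq_0)
  have "norm (2/3 * \<psi> u) < 1" using d(2)[OF u(1)] by (simp add: norm_mult)
  then have "\<bar>of_int n * pi\<bar> < 1" using n by (metis norm_of_real)
  then have lt: "\<bar>real_of_int n\<bar> * pi < 1" by (simp add: abs_mult)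
  have "n = 0"
  proof (rule ccontr)
    assume "n \<noteq> 0"
    then have "1 \<le> \<bar>n\<bar>" by linarith
    then have "1 \<le> \<bar>real_of_int n\<bar>" by (metis of_int_1_le_iff of_int_abs)
    then have "1 * pi \<le> \<bar>real_of_int n\<bar> * pi" by (intro mult_right_mono) auto
    then show False using lt pi_gt3 by linarith
  qed
  then have "\<psi> u = 0" using n by simp
  then have "complex_of_real \<kappa> * sin (\<phi> u) = 0" using assms(6) u(2) by (metis sin_zero)
  then have "sin (\<phi> u) = 0" using assms(1) by simp
  then have "u_of_phi \<kappa> (\<phi> u) = 0" by (simp add: u_of_phi_def)
  then show False using assms(3) u by auto
qed


theorem theorem10:
  fixes \<kappa> :: real and r :: real and \<phi> \<psi> :: "complex \<Rightarrow> complex"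
  assumes "0 < \<kappa>" and "\<kappa> < 1" and "0 < r"
    and "\<phi> holomorphic_on ball 0 r" and "\<phi> 0 = 0"
    and "\<forall>u\<in>ball 0 r. u_of_phi \<kappa> (\<phi> u) = u"
    and "\<psi> holomorphic_on ball 0 r" and "\<psi> 0 = 0"
    and "\<forall>u\<in>ball 0 r. sin (\<psi> u) = complex_of_real \<kappa> * sin (\<phi> u)"
  shows "\<not> (\<exists>g. elliptic g \<and> (\<forall>u\<in>ball 0 r. g u = (cos (2/3 * \<psi> u))\<^sup>2))"
proof
  assume "\<exists>g. elliptic g \<and> (\<forall>u\<in>ball 0 r. g u = (cos (2/3 * \<psi> u))\<^sup>2)"
  then obtain g where ell: "elliptic g" and geq: "\<forall>u\<in>ball 0 r. g u = (cos (2/3 * \<psi> u))\<^sup>2" by blast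
  from ell obtain w1 w2 where mero: "g meromorphic_on UNIV" and ind: "Im (w2 * cnj w1) \<noteq> 0"
    and per1: "\<And>z. g (z + w1) = g z" and per2: "\<And>z. g (z + w2) = g z"
    unfolding elliptic_def by blast
  obtain r1 where r1: "0 < r1" "r1 \<le> r" and loc: "\<And>u. u \<in> ball 0 r1 \<Longrightarrow>
      (deriv (\<lambda>u. cos (2/3 * \<psi> u) ^ 2) u ^ 2 - 16/9 * ((complex_of_real \<kappa>)^2 - 1/2) * (1 - cos (2/3 * \<psi> u) ^ 2)) ^ 2
      = (16/9)^2 * (1 - cos (2/3 * \<psi> u) ^ 2) ^ 2 * cos (2/3 * \<psi> u) ^ 2 * (2 * cos (2/3 * \<psi> u) ^ 2 - 3/2) ^ 2"
    using local_ode[OF assms] by blast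
  define N where "N u = cos (2/3 * \<psi> u) ^ 2" for u
  define G where "G = remove_sings g"
  define \<alpha> where "\<alpha> = 16/9 * ((complex_of_real \<kappa>)^2 - 1/2)"
  define \<beta> :: complex where "\<beta> = 16/9"
  have Gnice: "G nicely_meromorphic_on UNIV"
    unfolding G_def by (rule remove_sings_nicely_meromorphic[OF mero])
  have Gmero: "G meromorphic_on UNIV" using Gnice by (simp add: nicely_meromorphic_on_def)
  have Nholo: "N holomorphic_on ball 0 r"
    unfolding N_def by (intro holomorphic_intros assms(7))
  have gholo: "g holomorphic_on ball 0 r"
    by (rule holomorphic_transform[OF Nholo]) (use geq in \<open>simp add: N_def\<close>)
  have GN: "G u = N u" if "u \<in> ball 0 r" for u
  proof -
    have "g analytic_on {u}"
      using gholo that by (metis analytic_on_open open_ball analytic_on_subset empty_subsetI insert_subset)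
    then have "G u = g u" unfolding G_def by (rule remove_sings_at_analytic)
    then show ?thesis using geq that by (simp add: N_def)
  qed
  have G0: "G 0 = 1" using GN[of 0] assms(3,8) by (simp add: N_def)
  have Gper: "G (z + w) = G z" if "w \<in> {w1, w2}" for z w
  proof -
    have gw: "g \<circ> (\<lambda>z. z + w) = g" using that per1 per2 by (auto simp: o_def)
    have "filtermap (\<lambda>x. x + w) (at z) = at (z + w)"
      using filtermap_at_shift[of "-w" z] by simp
    then have "remove_sings (g \<circ> (\<lambda>z. z + w)) z = remove_sings g (z + w)"
      by (rule remove_sings_compose)
    then show ?thesis unfolding G_def gw by simp
  qed
  show False
  proof (cases "\<exists>z0. \<not> is_pole G z0 \<and> G z0 = 0")
    case True
    then obtain z0 where z0: "\<not> is_pole G z0" "G z0 = 0" by blast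
    have Gan: "G analytic_on {z0}" using nicely_meromorphic_on_imp_analytic_at[OF Gnice _ z0(1)] by simp
    have freq: "frequently (\<lambda>z. G z \<noteq> 0) (at z0)"
    proof (rule ccontr)
      assume "\<not> frequently (\<lambda>z. G z \<noteq> 0) (at z0)"
      then have "eventually (\<lambda>z. G z = 0) (at z0)" by (simp add: not_frequently)
      then have "frequently (\<lambda>z. G z = 0) (at z0)" by (rule eventually_frequently[rotated]) simp
      then have "G w = 0" for w
        using frequently_eq_meromorphic_imp_constant[OF _ Gnice open_UNIV connected_UNIV] by blast
      then show False using G0 by simp
    qed
    \<comment> \<open>the algebraic identity holds globally\<close>
    define Qf where "Qf z = (deriv G z ^ 2 - \<alpha> * (1 - G z)) ^ 2 - \<beta>^2 * (1 - G z) ^ 2 * G z * (2 * G z - 3/2) ^ 2" for z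
    have Qmero: "Qf meromorphic_on UNIV"
      unfolding Qf_def by (intro meromorphic_intros Gmero)
    define RQ where "RQ = remove_sings Qf"
    have RQnice: "RQ nicely_meromorphic_on UNIV" unfolding RQ_def by (rule remove_sings_nicely_meromorphic[OF Qmero])
    have Q0: "Qf u = 0" if "u \<in> ball 0 r1" for u
    proof -
      have ur: "u \<in> ball 0 r" using that r1 by auto
      have "eventually (\<lambda>w. w \<in> ball 0 r) (nhds u)" using ur by (intro eventually_nhds_in_open) auto
      then have "eventually (\<lambda>w. G w = N w) (nhds u)" by eventually_elim (rule GN)
      then have "deriv G u = deriv N u" by (rule deriv_cong_ev) simp
      moreover have "N = (\<lambda>u. cos (2/3 * \<psi> u) ^ 2)" by (simp add: N_def[abs_def])
      ultimately show ?thesis using loc[OF that] GN[OF ur] unfolding Qf_def \<alpha>_def \<beta>_def N_def by simp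
    qed
    have "eventually (\<lambda>w. RQ w = 0) (at 0)"
    proof -
      have "eventually (\<lambda>w. w \<in> ball 0 r1) (at (0::complex))" using r1 by (intro eventually_at_in_open') auto
      then show ?thesis
      proof eventually_elim
        case (elim w)
        have "eventually (\<lambda>v. v \<in> ball 0 r1) (at w)" using elim by (intro eventually_at_in_open') auto
        then have "eventually (\<lambda>v. Qf v = 0) (at w)" by eventually_elim (rule Q0)
        then have "Qf \<midarrow>w\<rightarrow> 0" by (rule tendsto_eventually)
        then show ?case unfolding RQ_def by (rule remove_sings_eqI)
      qed
    qed
    then have "frequently (\<lambda>w. RQ w = 0) (at 0)" by (rule eventually_frequently[rotated]) simp
    then have RQ0: "RQ w = 0" for w
      using frequently_eq_meromorphic_imp_constant[OF _ RQnice open_UNIV connected_UNIV] by blast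
    obtain e where e: "e > 0" "G holomorphic_on ball z0 e" using Gan by (auto simp: analytic_on_def)
    have Qan: "Qf analytic_on ball z0 e"
    proof -
      have "G analytic_on ball z0 e" using e(2) by (simp add: analytic_on_open)
      then show ?thesis unfolding Qf_def by (intro analytic_intros)
    qed
    have evQ: "eventually (\<lambda>w. Qf w = 0) (nhds z0)"
    proof -
      have "eventually (\<lambda>w. w \<in> ball z0 e) (nhds z0)" using e(1) by (intro eventually_nhds_in_open) auto
      then show ?thesis
      proof eventually_elim
        case (elim w)
        have "Qf analytic_on {w}" using Qan elim analytic_on_subset by blast
        then have "RQ w = Qf w" unfolding RQ_def by (rule remove_sings_at_analytic)
        then show ?case using RQ0 by simp
      qed
    qed
    define m where "m = zorder G z0"
    have mpos: "m > 0" unfolding m_def using zorder_pos_iff'[OF Gan freq] z0(2) by simp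
    have dGan: "deriv G analytic_on {z0}" by (rule analytic_deriv[OF Gan])
    have zd: "zorder (deriv G) z0 = m - 1" unfolding m_def
    proof (rule zorder_deriv_minus_1)
      show "isolated_singularity_at G z0" by (rule isolated_singularity_at_analytic[OF Gan])
      show "not_essential G z0" by (rule not_essential_analytic[OF Gan])
      show "\<exists>\<^sub>F w in at z0. G w \<noteq> 0" by (rule freq)
      show "zorder G z0 \<noteq> 0" using mpos m_def by simp
    qed
    have evGnz: "eventually (\<lambda>z. G z \<noteq> 0) (at z0)"
    proof -
      have "isolated_zero G z0"
      proof (rule ccontr)
        assume "\<not> isolated_zero G z0"
        then have "eventually (\<lambda>z. G z = 0) (at z0)" by (rule non_isolated_zero_imp_eventually_zero[OF Gan z0(2)])
        then show False using freq by (simp add: frequently_def)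
      qed
      then show ?thesis by (simp add: isolated_zero_def)
    qed
    define cR where "cR z = \<beta>^2 * (1 - G z)^2 * (2 * G z - 3/2)^2" for z
    define h where "h z = deriv G z ^ 2 - \<alpha> * (1 - G z)" for z
    have cRan: "cR analytic_on {z0}" unfolding cR_def by (intro analytic_intros Gan)
    have hAn: "h analytic_on {z0}" unfolding h_def by (intro analytic_intros Gan dGan)
    have cR0: "cR z0 \<noteq> 0" by (simp add: cR_def z0(2) \<beta>_def)
    have evcR: "eventually (\<lambda>z. cR z \<noteq> 0) (at z0)"
    proof -
      have "isCont cR z0" by (rule analytic_at_imp_isCont[OF cRan])
      then have "cR \<midarrow>z0\<rightarrow> cR z0" by (simp add: isCont_def)
      then show ?thesis using cR0 by (rule tendsto_imp_eventually_ne)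
    qed
    have evR: "eventually (\<lambda>z. cR z * G z \<noteq> 0) (at z0)"
      using evcR evGnz by eventually_elim simp
    have zR: "zorder (\<lambda>z. cR z * G z) z0 = m"
      using zorder_times_analytic[OF cRan Gan evR] zorder_eq_0I[OF cRan cR0] by (simp add: m_def)
    have Qeq: "Qf w = h w ^ 2 - cR w * G w" for w
      unfolding Qf_def h_def cR_def by algebra
    have hRn: "eventually (\<lambda>z. h z ^ 2 = cR z * G z) (nhds z0)"
      using evQ by eventually_elim (simp add: Qeq)
    have hR: "eventually (\<lambda>z. h z ^ 2 = cR z * G z) (at z0)"
      using hRn by (simp add: eventually_nhds_conv_at)
    have hz0: "h z0 ^ 2 = cR z0 * G z0" using hRn by (rule eventually_nhds_x_imp_x)
    have zh: "zorder (\<lambda>z. h z ^ 2) z0 = zorder (\<lambda>z. cR z * G z) z0"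
      by (rule zorder_cong[OF hR refl])
    have evh: "eventually (\<lambda>z. h z \<noteq> 0) (at z0)"
      using hR evR by eventually_elim auto
    have freqh: "frequently (\<lambda>z. h z \<noteq> 0) (at z0)"
      by (rule eventually_frequently[OF _ evh]) simp
    have zh2: "zorder (\<lambda>z. h z ^ 2) z0 = int 2 * zorder h z0"
      by (rule zorder_power[OF analytic_on_imp_meromorphic_on[OF hAn] freqh])
    have mh: "m = 2 * zorder h z0" using zh zh2 zR by simp
    show False
    proof (cases "\<alpha> = 0")
      case False
      have "h z0 = 0" using hz0 z0(2) by simp
      then have "deriv G z0 ^ 2 = \<alpha>" using z0(2) by (simp add: h_def)
      then have "deriv G z0 \<noteq> 0" using False by auto
      then have "zorder (deriv G) z0 = 0" by (rule zorder_eq_0I[OF dGan])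
      then have "m = 1" using zd by simp
      then show False using mh by presburger
    next
      case True
      have hE: "h = (\<lambda>z. deriv G z ^ 2)" using True by (simp add: h_def[abs_def])
      have "frequently (\<lambda>z. deriv G z \<noteq> 0) (at z0)"
        using freqh unfolding hE by (auto elim: frequently_elim1)
      then have "zorder (\<lambda>z. deriv G z ^ 2) z0 = int 2 * zorder (deriv G) z0"
        by (rule zorder_power[OF analytic_on_imp_meromorphic_on[OF dGan]])
      then have "zorder h z0 = 2 * (m - 1)" using zd hE by simp
      then show False using mh by presburger
    qed
  next
    case False
    define K where "K z = inverse (G z)" for z
    have Knice: "K nicely_meromorphic_on UNIV"
      unfolding K_def by (rule nicely_meromorphic_on_inverse[OF Gnice])
    have nopole: "\<not> is_pole K z" for z
    proof
      assume "is_pole K z"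
      then have iz: "isolated_zero G z" unfolding K_def by (simp add: is_pole_inverse_iff)
      then have lim: "G \<midarrow>z\<rightarrow> 0" by (simp add: isolated_zero_def)
      then have np: "\<not> is_pole G z"
        unfolding is_pole_def using not_tendsto_and_filterlim_at_infinity[OF trivial_limit_at lim] by blast
      then have "G \<midarrow>z\<rightarrow> G z" using Gnice by (auto simp: nicely_meromorphic_on_def)
      then have "G z = 0" using lim by (metis tendsto_unique trivial_limit_at)
      then show False using False np by blast
    qed
    have Kan: "K analytic_on {z}" for z
      using nicely_meromorphic_on_imp_analytic_at[OF Knice _ nopole] by simp
    have Kholo: "K holomorphic_on UNIV"
      using Kan by (metis analytic_imp_holomorphic analytic_on_analytic_at)
    have Kper: "K (z + of_int n * w) = K z" if "w \<in> {w1, w2}" for z w n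
      unfolding K_def using per_int[of G w z n] Gper[OF that] by simp
    define T where "T = (\<lambda>(a, b). of_real a * w1 + of_real b * w2) ` ({0..1::real} \<times> {0..1::real})"
    have "compact T" unfolding T_def
      by (intro compact_continuous_image compact_Times compact_Icc continuous_intros) (auto simp: case_prod_unfold intro!: continuous_intros)
    moreover have "continuous_on T K" using Kholo holomorphic_on_imp_continuous_on holomorphic_on_subset by blast
    ultimately have "compact (K ` T)" by (meson compact_continuous_image)
    then have bT: "bounded (K ` T)" by (rule compact_imp_bounded)
    have "range K \<subseteq> K ` T"
    proof clarify
      fix z
      obtain a b :: real where ab: "z = of_real a * w1 + of_real b * w2" using lattice_coords[OF ind] by blast
      define a' where "a' = a - of_int (floor a)"
      define b' where "b' = b - of_int (floor b)"
      have "a' \<in> {0..1}" "b' \<in> {0..1}" unfolding a'_def b'_def by (auto simp: floor_le_iff) linarith+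
      then have inT: "of_real a' * w1 + of_real b' * w2 \<in> T" unfolding T_def by force
      have "z = (of_real a' * w1 + of_real b' * w2) + of_int (floor a) * w1 + of_int (floor b) * w2"
        unfolding ab a'_def b'_def by (simp add: algebra_simps)
      then have "K z = K (of_real a' * w1 + of_real b' * w2)"
        using Kper[of w1 _ "floor a"] Kper[of w2 _ "floor b"] by simp
      then show "K z \<in> K ` T" using inT by blast
    qed
    then have "bounded (range K)" using bT bounded_subset by blast
    then have "K constant_on UNIV" using Liouville_theorem[OF Kholo] by blast
    then have "K z = K 0" for z by (auto simp: constant_on_def)
    then have G1: "G z = 1" for z using G0 unfolding K_def by (metis inverse_1 inverse_inverse_eq)
    obtain u where u: "u \<in> ball 0 r" "cos (2/3 * \<psi> u) ^ 2 \<noteq> 1"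
      using N_not_one[OF assms(1,3,6,7,8,9)] by blast
    show False using GN[OF u(1)] G1[of u] u(2) by (simp add: N_def)
  qed
qed


end
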